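(* Let $(X_n)_{n\ge 0}$ be a discrete-time Markov chain on $\mathbb{R}^d$ with one-step transition densities $p_n(x,y)=p_{n,n+1}(x,y)$ and multi-step transition densities $p_{n,m}(x,y)$, $m\ge n$. Fix $N\in\mathbb{N}$, $y\in\mathbb{R}^d$, and functions $\psi_m:\mathbb{R}^d\times\mathbb{R}^d\to\mathbb{R}_+$, $0\le m<N$, such that for each $m$ and each $z$ the function $q_m(z,\cdot):=p_{N-m-1}(\cdot,z)/\psi_m(z,\cdot)$ is a probability density on $\mathbb{R}^d$. Let $(Y_m,\mathcal{Y}_m)_{0\le m\le N}=(Y^{y;N}_m,\mathcal{Y}^{y;N}_m)_{0\le m\le N}$ be the reverse process with $Y_0=y$, $\mathcal{Y}_0=1$, $\mathbb{P}(Y_{m+1}\in dz'\mid Y_m=z)=q_m(z,z')dz'$ and $\mathcal{Y}_{m+1}=\mathcal{Y}_m\psi_m(Y_m,Y_{m+1})$ for $0\le m<N$. Given a grid $0\le n^\ast<n_1<\cdots<n_l=N$ and setting $n_0:=n^\ast$, $y_l:=y$, it holds for every test function $f:\mathbb{R}^{d\times l}\to\mathbb{R}$ (e.g. bounded measurable) that $$\mathbb{E}\left[f\left(Y_{n_l-n_0},Y_{n_l-n_1},\ldots,Y_{n_l-n_{l-1}}\right)\mathcal{Y}_{n_l-n_0}\right]=\int_{\mathbb{R}^{d\times l}}f(y_0,y_1,\ldots,y_{l-1})\prod_{i=1}^{l}p_{n_{i-1},n_i}(y_{i-1},y_i)\,dy_{i-1}.$$ *)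

theory Defs
  imports "HOL-Probability.Probability"
begin

text \<open>Multi-step transition densities obtained from the one-step densities
  p n x y = p_{n,n+1}(x,y) by Chapman--Kolmogorov:
  mdens_aux p n k x y = p_{n,n+k+1}(x,y).\<close>
primrec mdens_aux ::
  "(nat \<Rightarrow> real^'d \<Rightarrow> real^'d \<Rightarrow> real) \<Rightarrow> nat \<Rightarrow> nat \<Rightarrow> real^'d \<Rightarrow> real^'d \<Rightarrow> ennreal" where
  "mdens_aux p n 0 x y = ennreal (p n x y)"
| "mdens_aux p n (Suc k) x y =
     (\<integral>\<^sup>+ z. mdens_aux p n k x z * ennreal (p (n + Suc k) z y) \<partial>lborel)"

definition trans_dens ::
  "(nat \<Rightarrow> real^'d \<Rightarrow> real^'d \<Rightarrow> real) \<Rightarrow> nat \<Rightarrow> nat \<Rightarrow> real^'d \<Rightarrow> real^'d \<Rightarrow> ennreal" where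
  "trans_dens p n m x y = mdens_aux p n (m - n - 1) x y"

definition rev_kernel ::
  "(nat \<Rightarrow> real^'d \<Rightarrow> real^'d \<Rightarrow> real) \<Rightarrow> (nat \<Rightarrow> real^'d \<Rightarrow> real^'d \<Rightarrow> real) \<Rightarrow> nat
     \<Rightarrow> nat \<Rightarrow> real^'d \<Rightarrow> real^'d \<Rightarrow> real" where
  "rev_kernel p \<psi> N m z x = p (N - m - 1) x z / \<psi> m z x"

definition rev_weight ::
  "(nat \<Rightarrow> real^'d \<Rightarrow> real^'d \<Rightarrow> real) \<Rightarrow> (nat \<Rightarrow> 'a \<Rightarrow> real^'d) \<Rightarrow> nat \<Rightarrow> 'a \<Rightarrow> real" where
  "rev_weight \<psi> Y m \<omega> = (\<Prod>k<m. \<psi> k (Y k \<omega>) (Y (Suc k) \<omega>))"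

end

theory Submission
  imports Defs
begin

lemma meas_app2:
  assumes h: "(\<lambda>(x, y). h x y) \<in> borel_measurable (borel \<Otimes>\<^sub>M borel)"
    and f: "f \<in> N \<rightarrow>\<^sub>M borel" and g: "g \<in> N \<rightarrow>\<^sub>M borel"
  shows "(\<lambda>\<omega>. h (f \<omega>) (g \<omega>)) \<in> borel_measurable N"
  using measurable_compose[OF measurable_Pair[OF f g] h] by simp

lemma mdens_meas:
  fixes p :: "nat \<Rightarrow> real^'d \<Rightarrow> real^'d \<Rightarrow> real"
  assumes p_meas: "\<And>k. (\<lambda>(x, z). p k x z) \<in> borel_measurable (borel \<Otimes>\<^sub>M borel)"
  shows "(\<lambda>(x, z). mdens_aux p n k x z) \<in> borel_measurable (borel \<Otimes>\<^sub>M borel)"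
proof (induction k)
  case 0
  show ?case using p_meas[of n] by simp
next
  case (Suc k)
  have "(\<lambda>xwz. mdens_aux p n k (fst (fst xwz)) (snd xwz) * ennreal (p (n + Suc k) (snd xwz) (snd (fst xwz))))
      \<in> borel_measurable ((borel \<Otimes>\<^sub>M borel) \<Otimes>\<^sub>M lborel)"
    apply (intro borel_measurable_times_ennreal)
     apply (rule meas_app2[where h="mdens_aux p n k", OF Suc.IH]; measurable)
    apply (intro measurable_compose[OF _ measurable_ennreal])
    apply (rule meas_app2[where h="p (n + Suc k)", OF p_meas]; measurable)
    done
  then have "(\<lambda>xw. \<integral>\<^sup>+ z. mdens_aux p n k (fst xw) z * ennreal (p (n + Suc k) z (snd xw)) \<partial>lborel)
      \<in> borel_measurable (borel \<Otimes>\<^sub>M borel)"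
    by (intro lborel.borel_measurable_nn_integral) (simp add: case_prod_beta)
  then show ?case by (simp add: case_prod_beta)
qed

lemma mdens_CK:
  fixes p :: "nat \<Rightarrow> real^'d \<Rightarrow> real^'d \<Rightarrow> real"
  assumes p_meas: "\<And>k. (\<lambda>(x, z). p k x z) \<in> borel_measurable (borel \<Otimes>\<^sub>M borel)"
  shows "mdens_aux p n (Suc k) x w = (\<integral>\<^sup>+ z. ennreal (p n x z) * mdens_aux p (Suc n) k z w \<partial>lborel)"
proof (induction k arbitrary: w)
  case 0
  then show ?case by simp
next
  case (Suc k)
  have "mdens_aux p n (Suc (Suc k)) x w =
      (\<integral>\<^sup>+ z. (\<integral>\<^sup>+ u. ennreal (p n x u) * mdens_aux p (Suc n) k u z \<partial>lborel) * ennreal (p (n + Suc (Suc k)) z w) \<partial>lborel)"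
    using Suc.IH by simp
  also have "\<dots> = (\<integral>\<^sup>+ z. (\<integral>\<^sup>+ u. ennreal (p n x u) * mdens_aux p (Suc n) k u z * ennreal (p (n + Suc (Suc k)) z w) \<partial>lborel) \<partial>lborel)"
    apply (intro nn_integral_cong)
    apply (rule nn_integral_multc[symmetric])
    apply (intro borel_measurable_times_ennreal)
     apply (intro measurable_compose[OF _ measurable_ennreal])
     apply (rule meas_app2[where h="p n", OF p_meas]; measurable)
    apply (rule meas_app2[where h="mdens_aux p (Suc n) k", OF mdens_meas[OF p_meas]]; measurable)
    done
  also have "\<dots> = (\<integral>\<^sup>+ u. (\<integral>\<^sup>+ z. ennreal (p n x u) * mdens_aux p (Suc n) k u z * ennreal (p (n + Suc (Suc k)) z w) \<partial>lborel) \<partial>lborel)"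
  proof (rule lborel_pair.Fubini')
    have "(\<lambda>uz. ennreal (p n x (fst uz)) * mdens_aux p (Suc n) k (fst uz) (snd uz) * ennreal (p (n + Suc (Suc k)) (snd uz) w))
      \<in> borel_measurable (lborel \<Otimes>\<^sub>M lborel)"
      apply (intro borel_measurable_times_ennreal)
        apply (intro measurable_compose[OF _ measurable_ennreal])
        apply (rule meas_app2[where h="p n", OF p_meas]; measurable)
       apply (rule meas_app2[where h="mdens_aux p (Suc n) k", OF mdens_meas[OF p_meas]]; measurable)
      apply (intro measurable_compose[OF _ measurable_ennreal])
      apply (rule meas_app2[where h="p (n + Suc (Suc k))", OF p_meas]; measurable)
      done
    then show "(\<lambda>(u, z). ennreal (p n x u) * mdens_aux p (Suc n) k u z * ennreal (p (n + Suc (Suc k)) z w))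
      \<in> borel_measurable (lborel \<Otimes>\<^sub>M lborel)" by (simp add: case_prod_beta)
  qed
  also have "\<dots> = (\<integral>\<^sup>+ u. ennreal (p n x u) * (\<integral>\<^sup>+ z. mdens_aux p (Suc n) k u z * ennreal (p (Suc n + Suc k) z w) \<partial>lborel) \<partial>lborel)"
    apply (intro nn_integral_cong)
    apply (subst nn_integral_cmult[symmetric])
     apply (intro borel_measurable_times_ennreal)
      apply (rule meas_app2[where h="mdens_aux p (Suc n) k", OF mdens_meas[OF p_meas]]; measurable)
     apply (intro measurable_compose[OF _ measurable_ennreal])
     apply (rule meas_app2[where h="p (Suc n + Suc k)", OF p_meas]; measurable)
    apply (simp add: mult.assoc)
    done
  finally show ?case by simp
qed

lemma mdens_inner:
  fixes p :: "nat \<Rightarrow> real^'d \<Rightarrow> real^'d \<Rightarrow> real"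
  assumes p_meas: "\<And>k. (\<lambda>(x, z). p k x z) \<in> borel_measurable (borel \<Otimes>\<^sub>M borel)"
    and H: "H \<in> borel_measurable lborel"
  shows "(\<integral>\<^sup>+ x. mdens_aux p n (Suc k) x w * H x \<partial>lborel)
    = (\<integral>\<^sup>+ z. mdens_aux p (Suc n) k z w * (\<integral>\<^sup>+ x. ennreal (p n x z) * H x \<partial>lborel) \<partial>lborel)"
proof -
  have m1: "(\<lambda>xz. ennreal (p n (fst xz) (snd xz)) * mdens_aux p (Suc n) k (snd xz) w * H (fst xz))
      \<in> borel_measurable (lborel \<Otimes>\<^sub>M lborel)"
    apply (intro borel_measurable_times_ennreal)
      apply (intro measurable_compose[OF _ measurable_ennreal])
      apply (rule meas_app2[where h="p n", OF p_meas]; measurable)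
     apply (rule meas_app2[where h="mdens_aux p (Suc n) k", OF mdens_meas[OF p_meas]]; measurable)
    apply (rule measurable_compose[OF _ H]; measurable)
    done
  have "(\<integral>\<^sup>+ x. mdens_aux p n (Suc k) x w * H x \<partial>lborel)
     = (\<integral>\<^sup>+ x. (\<integral>\<^sup>+ z. ennreal (p n x z) * mdens_aux p (Suc n) k z w * H x \<partial>lborel) \<partial>lborel)"
    apply (intro nn_integral_cong)
    apply (subst mdens_CK[OF p_meas])
    apply (rule nn_integral_multc[symmetric])
    apply (intro borel_measurable_times_ennreal)
     apply (intro measurable_compose[OF _ measurable_ennreal])
     apply (rule meas_app2[where h="p n", OF p_meas]; measurable)
    apply (rule meas_app2[where h="mdens_aux p (Suc n) k", OF mdens_meas[OF p_meas]]; measurable)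
    done
  also have "\<dots> = (\<integral>\<^sup>+ z. (\<integral>\<^sup>+ x. ennreal (p n x z) * mdens_aux p (Suc n) k z w * H x \<partial>lborel) \<partial>lborel)"
    apply (rule lborel_pair.Fubini'[symmetric])
    using m1 by (simp add: case_prod_beta')
  also have "\<dots> = (\<integral>\<^sup>+ z. mdens_aux p (Suc n) k z w * (\<integral>\<^sup>+ x. ennreal (p n x z) * H x \<partial>lborel) \<partial>lborel)"
    apply (intro nn_integral_cong)
    apply (subst nn_integral_cmult[symmetric])
     apply (intro borel_measurable_times_ennreal H)
     apply (intro measurable_compose[OF _ measurable_ennreal])
     apply (rule meas_app2[where h="p n", OF p_meas]; measurable)
    apply (simp add: ac_simps)
    done
  finally show ?thesis .
qed

lemma PiM_lborel_meas:
  "f \<in> borel_measurable (PiM I (\<lambda>_. borel)) \<Longrightarrow> f \<in> borel_measurable (PiM I (\<lambda>_. (lborel :: ('b::euclidean_space) measure)))"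
  by (subst measurable_cong_sets[OF sets_PiM_cong[OF refl sets_lborel] refl])

interpretation lb: product_sigma_finite "\<lambda>_::nat. (lborel :: ('b::euclidean_space) measure)"
  by (simp add: product_sigma_finite_def sigma_finite_lborel)

lemma meas_if_const: "(P \<Longrightarrow> f \<in> M \<rightarrow>\<^sub>M N) \<Longrightarrow> (\<not> P \<Longrightarrow> g \<in> M \<rightarrow>\<^sub>M N) \<Longrightarrow> (\<lambda>x. if P then f x else g x) \<in> M \<rightarrow>\<^sub>M N"
  by (cases P) auto

locale revp =
  fixes p :: "nat \<Rightarrow> real^'d \<Rightarrow> real^'d \<Rightarrow> real"
    and \<psi> :: "nat \<Rightarrow> real^'d \<Rightarrow> real^'d \<Rightarrow> real"
    and N :: nat and y :: "real^'d"
    and M :: "'a measure" and Y :: "nat \<Rightarrow> 'a \<Rightarrow> real^'d"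
  assumes p_meas: "\<And>k. (\<lambda>(x, z). p k x z) \<in> borel_measurable (borel \<Otimes>\<^sub>M borel)"
    and p_nonneg: "\<And>k x z. p k x z \<ge> 0"
    and psi_meas: "\<And>m. m < N \<Longrightarrow> (\<lambda>(z, x). \<psi> m z x) \<in> borel_measurable (borel \<Otimes>\<^sub>M borel)"
    and psi_nonneg: "\<And>m z x. m < N \<Longrightarrow> \<psi> m z x \<ge> 0"
    and psi_pos: "\<And>m z x. m < N \<Longrightarrow> p (N - m - 1) x z > 0 \<Longrightarrow> \<psi> m z x > 0"
    and M_prob: "prob_space M"
    and Y_meas: "\<And>m. m \<le> N \<Longrightarrow> Y m \<in> borel_measurable M"
    and Y_0: "\<And>\<omega>. \<omega> \<in> space M \<Longrightarrow> Y 0 \<omega> = y"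
    and Y_trans: "\<And>m g. m < N \<Longrightarrow>
        case_prod g \<in> borel_measurable (PiM {..m} (\<lambda>_. borel) \<Otimes>\<^sub>M borel) \<Longrightarrow>
        (\<integral>\<^sup>+ \<omega>. g (\<lambda>i\<in>{..m}. Y i \<omega>) (Y (Suc m) \<omega>) \<partial>M) =
        (\<integral>\<^sup>+ \<omega>. (\<integral>\<^sup>+ z. ennreal (rev_kernel p \<psi> N m (Y m \<omega>) z) * g (\<lambda>i\<in>{..m}. Y i \<omega>) z \<partial>lborel) \<partial>M)"
begin

lemma qpsi:
  assumes "m < N"
  shows "ennreal (rev_kernel p \<psi> N m z x) * ennreal (\<psi> m z x) = ennreal (p (N - m - 1) x z)"
proof (cases "\<psi> m z x = 0")
  case True
  have "\<not> p (N - m - 1) x z > 0" using psi_pos[OF assms, of x z] True by auto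
  then have "p (N - m - 1) x z = 0" using p_nonneg[of "N - m - 1" x z] by linarith
  then show ?thesis using True by (simp add: rev_kernel_def)
next
  case False
  have "\<psi> m z x > 0" using False psi_nonneg[OF assms, of z x] by linarith
  moreover have "rev_kernel p \<psi> N m z x \<ge> 0"
    unfolding rev_kernel_def using p_nonneg psi_nonneg[OF assms] by simp
  ultimately show ?thesis
    by (simp add: ennreal_mult''[symmetric] rev_kernel_def)
qed

lemma weight_nonneg: "m \<le> N \<Longrightarrow> rev_weight \<psi> Y m \<omega> \<ge> 0"
  unfolding rev_weight_def by (intro prod_nonneg) (auto intro: psi_nonneg)

lemma step:
  assumes mN: "m < N"
    and G: "case_prod G \<in> borel_measurable (PiM {..m} (\<lambda>_. borel) \<Otimes>\<^sub>M borel)"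
  shows "(\<integral>\<^sup>+ \<omega>. G (\<lambda>i\<in>{..m}. Y i \<omega>) (Y (Suc m) \<omega>) * ennreal (rev_weight \<psi> Y (Suc m) \<omega>) \<partial>M)
    = (\<integral>\<^sup>+ \<omega>. (\<integral>\<^sup>+ x. ennreal (p (N - m - 1) x (Y m \<omega>)) * G (\<lambda>i\<in>{..m}. Y i \<omega>) x \<partial>lborel)
          * ennreal (rev_weight \<psi> Y m \<omega>) \<partial>M)"
proof -
  define Wf where "Wf u = (\<Prod>k<m. \<psi> k (u k) (u (Suc k)))" for u :: "nat \<Rightarrow> real^'d"
  define g where "g u x = G u x * ennreal (\<psi> m (u m) x) * ennreal (Wf u)" for u x
  have Wf_meas: "Wf \<in> borel_measurable (PiM {..m} (\<lambda>_. borel))"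
    unfolding Wf_def
    apply (intro borel_measurable_prod)
    apply (rule meas_app2[OF psi_meas]; (measurable | simp))
    using mN by simp
  have "(\<lambda>ux. g (fst ux) (snd ux)) \<in> borel_measurable (PiM {..m} (\<lambda>_. borel) \<Otimes>\<^sub>M borel)"
    unfolding g_def
    apply (intro borel_measurable_times_ennreal)
    subgoal using G by (simp add: case_prod_beta')
     apply (intro measurable_compose[OF _ measurable_ennreal])
     apply (rule meas_app2[OF psi_meas[OF mN]]; measurable)
    apply (intro measurable_compose[OF _ measurable_ennreal])
    apply (rule measurable_compose[OF _ Wf_meas]; measurable)
    done
  then have gm: "case_prod g \<in> borel_measurable (PiM {..m} (\<lambda>_. borel) \<Otimes>\<^sub>M borel)"
    by (simp add: case_prod_beta)
  have "(\<integral>\<^sup>+ \<omega>. G (\<lambda>i\<in>{..m}. Y i \<omega>) (Y (Suc m) \<omega>) * ennreal (rev_weight \<psi> Y (Suc m) \<omega>) \<partial>M)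
      = (\<integral>\<^sup>+ \<omega>. g (\<lambda>i\<in>{..m}. Y i \<omega>) (Y (Suc m) \<omega>) \<partial>M)"
  proof (rule nn_integral_cong)
    fix \<omega>
    have "Wf (\<lambda>i\<in>{..m}. Y i \<omega>) = rev_weight \<psi> Y m \<omega>"
      unfolding Wf_def rev_weight_def by (intro prod.cong) auto
    moreover have "rev_weight \<psi> Y (Suc m) \<omega> = \<psi> m (Y m \<omega>) (Y (Suc m) \<omega>) * rev_weight \<psi> Y m \<omega>"
      unfolding rev_weight_def by simp
    ultimately show "G (\<lambda>i\<in>{..m}. Y i \<omega>) (Y (Suc m) \<omega>) * ennreal (rev_weight \<psi> Y (Suc m) \<omega>)
      = g (\<lambda>i\<in>{..m}. Y i \<omega>) (Y (Suc m) \<omega>)"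
      unfolding g_def using psi_nonneg[OF mN] weight_nonneg[of m \<omega>] mN
      by (simp add: ennreal_mult mult.assoc)
  qed
  also have "\<dots> = (\<integral>\<^sup>+ \<omega>. (\<integral>\<^sup>+ z. ennreal (rev_kernel p \<psi> N m (Y m \<omega>) z) * g (\<lambda>i\<in>{..m}. Y i \<omega>) z \<partial>lborel) \<partial>M)"
    by (rule Y_trans[OF mN gm])
  also have "\<dots> = (\<integral>\<^sup>+ \<omega>. (\<integral>\<^sup>+ x. ennreal (p (N - m - 1) x (Y m \<omega>)) * G (\<lambda>i\<in>{..m}. Y i \<omega>) x \<partial>lborel)
          * ennreal (rev_weight \<psi> Y m \<omega>) \<partial>M)"
  proof (rule nn_integral_cong)
    fix \<omega>
    have W: "Wf (\<lambda>i\<in>{..m}. Y i \<omega>) = rev_weight \<psi> Y m \<omega>"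
      unfolding Wf_def rev_weight_def by (intro prod.cong) auto
    have Gm: "(\<lambda>x. G (\<lambda>i\<in>{..m}. Y i \<omega>) x) \<in> borel_measurable lborel"
      by (rule measurable_compose[OF _ G, where f="\<lambda>x. ((\<lambda>i\<in>{..m}. Y i \<omega>), x)", simplified]; measurable)
    have "(\<integral>\<^sup>+ z. ennreal (rev_kernel p \<psi> N m (Y m \<omega>) z) * g (\<lambda>i\<in>{..m}. Y i \<omega>) z \<partial>lborel)
       = (\<integral>\<^sup>+ x. ennreal (p (N - m - 1) x (Y m \<omega>)) * G (\<lambda>i\<in>{..m}. Y i \<omega>) x * ennreal (rev_weight \<psi> Y m \<omega>) \<partial>lborel)"
    proof (rule nn_integral_cong)
      fix z
      have "ennreal (rev_kernel p \<psi> N m (Y m \<omega>) z) * g (\<lambda>i\<in>{..m}. Y i \<omega>) z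
        = (ennreal (rev_kernel p \<psi> N m (Y m \<omega>) z) * ennreal (\<psi> m (Y m \<omega>) z)) * G (\<lambda>i\<in>{..m}. Y i \<omega>) z * ennreal (rev_weight \<psi> Y m \<omega>)"
        unfolding g_def W by (simp add: ac_simps)
      then show "ennreal (rev_kernel p \<psi> N m (Y m \<omega>) z) * g (\<lambda>i\<in>{..m}. Y i \<omega>) z
        = ennreal (p (N - m - 1) z (Y m \<omega>)) * G (\<lambda>i\<in>{..m}. Y i \<omega>) z * ennreal (rev_weight \<psi> Y m \<omega>)"
        by (simp add: qpsi[OF mN])
    qed
    also have "\<dots> = (\<integral>\<^sup>+ x. ennreal (p (N - m - 1) x (Y m \<omega>)) * G (\<lambda>i\<in>{..m}. Y i \<omega>) x \<partial>lborel) * ennreal (rev_weight \<psi> Y m \<omega>)"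
      apply (rule nn_integral_multc)
      apply (intro borel_measurable_times_ennreal Gm)
      apply (intro measurable_compose[OF _ measurable_ennreal])
      apply (rule meas_app2[OF p_meas]; measurable)
      done
    finally show "(\<integral>\<^sup>+ z. ennreal (rev_kernel p \<psi> N m (Y m \<omega>) z) * g (\<lambda>i\<in>{..m}. Y i \<omega>) z \<partial>lborel)
       = (\<integral>\<^sup>+ x. ennreal (p (N - m - 1) x (Y m \<omega>)) * G (\<lambda>i\<in>{..m}. Y i \<omega>) x \<partial>lborel) * ennreal (rev_weight \<psi> Y m \<omega>)" .
  qed
  finally show ?thesis .
qed

lemma multi:
  assumes "a + k < N"
    and G: "case_prod G \<in> borel_measurable (PiM {..a} (\<lambda>_. borel) \<Otimes>\<^sub>M borel)"
  shows "(\<integral>\<^sup>+ \<omega>. G (\<lambda>i\<in>{..a}. Y i \<omega>) (Y (Suc (a + k)) \<omega>) * ennreal (rev_weight \<psi> Y (Suc (a + k)) \<omega>) \<partial>M)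
    = (\<integral>\<^sup>+ \<omega>. (\<integral>\<^sup>+ x. mdens_aux p (N - Suc (a + k)) k x (Y a \<omega>) * G (\<lambda>i\<in>{..a}. Y i \<omega>) x \<partial>lborel)
          * ennreal (rev_weight \<psi> Y a \<omega>) \<partial>M)"
  using assms
proof (induction k arbitrary: G)
  case 0
  have "N - a - 1 = N - Suc a" by simp
  with step[of a G] 0 show ?case by (auto simp: restrict_def)
next
  case (Suc k)
  define m where "m = Suc (a + k)"
  have mN: "m < N" using Suc.prems unfolding m_def by simp
  note G = Suc.prems(2)
  define G' where "G' u x = G (restrict u {..a}) x" for u :: "nat \<Rightarrow> real^'d" and x
  have G'm: "case_prod G' \<in> borel_measurable (PiM {..m} (\<lambda>_. borel) \<Otimes>\<^sub>M borel)"
  proof -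
    have "(\<lambda>ux. G (restrict (fst ux) {..a}) (snd ux)) \<in> borel_measurable (PiM {..m} (\<lambda>_. borel) \<Otimes>\<^sub>M borel)"
      apply (rule measurable_compose[OF _ G, where f="\<lambda>ux. (restrict (fst ux) {..a}, snd ux)", simplified])
      apply (intro measurable_Pair)
       apply (rule measurable_compose[OF measurable_fst measurable_restrict_subset])
       apply (simp add: m_def)
      apply measurable
      done
    then show ?thesis unfolding G'_def by (simp add: case_prod_beta')
  qed
  have rr: "restrict (\<lambda>i\<in>{..m}. Y i \<omega>) {..a} = (\<lambda>i\<in>{..a}. Y i \<omega>)" for \<omega>
    by (auto simp: restrict_def fun_eq_iff m_def)
  define G'' where "G'' u z = (\<integral>\<^sup>+ x. ennreal (p (N - Suc m) x z) * G u x \<partial>lborel)" for u z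
  have G''m: "case_prod G'' \<in> borel_measurable (PiM {..a} (\<lambda>_. borel) \<Otimes>\<^sub>M borel)"
  proof -
    have "(\<lambda>uzx. ennreal (p (N - Suc m) (snd uzx) (snd (fst uzx))) * G (fst (fst uzx)) (snd uzx))
       \<in> borel_measurable ((PiM {..a} (\<lambda>_. borel) \<Otimes>\<^sub>M borel) \<Otimes>\<^sub>M lborel)"
      apply (intro borel_measurable_times_ennreal)
       apply (intro measurable_compose[OF _ measurable_ennreal])
       apply (rule meas_app2[OF p_meas]; measurable)
      apply (rule measurable_compose[OF _ G, where f="\<lambda>uzx. (fst (fst uzx), snd uzx)", simplified])
      apply measurable
      done
    then have "(\<lambda>uz. G'' (fst uz) (snd uz)) \<in> borel_measurable (PiM {..a} (\<lambda>_. borel) \<Otimes>\<^sub>M borel)"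
      unfolding G''_def
      by (intro lborel.borel_measurable_nn_integral) (simp add: case_prod_beta')
    then show ?thesis by (simp add: case_prod_beta')
  qed
  have "(\<integral>\<^sup>+ \<omega>. G (\<lambda>i\<in>{..a}. Y i \<omega>) (Y (Suc m) \<omega>) * ennreal (rev_weight \<psi> Y (Suc m) \<omega>) \<partial>M)
     = (\<integral>\<^sup>+ \<omega>. G' (\<lambda>i\<in>{..m}. Y i \<omega>) (Y (Suc m) \<omega>) * ennreal (rev_weight \<psi> Y (Suc m) \<omega>) \<partial>M)"
    unfolding G'_def rr ..
  also have "\<dots> = (\<integral>\<^sup>+ \<omega>. (\<integral>\<^sup>+ x. ennreal (p (N - m - 1) x (Y m \<omega>)) * G' (\<lambda>i\<in>{..m}. Y i \<omega>) x \<partial>lborel)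
          * ennreal (rev_weight \<psi> Y m \<omega>) \<partial>M)"
    by (rule step[OF mN G'm])
  also have "\<dots> = (\<integral>\<^sup>+ \<omega>. G'' (\<lambda>i\<in>{..a}. Y i \<omega>) (Y (Suc (a + k)) \<omega>) * ennreal (rev_weight \<psi> Y (Suc (a + k)) \<omega>) \<partial>M)"
    unfolding G'_def rr G''_def m_def by simp
  also have "\<dots> = (\<integral>\<^sup>+ \<omega>. (\<integral>\<^sup>+ z. mdens_aux p (N - m) k z (Y a \<omega>) * G'' (\<lambda>i\<in>{..a}. Y i \<omega>) z \<partial>lborel)
          * ennreal (rev_weight \<psi> Y a \<omega>) \<partial>M)"
    using Suc.IH[OF _ G''m] Suc.prems(1) unfolding m_def by (auto simp: restrict_def)
  also have "\<dots> = (\<integral>\<^sup>+ \<omega>. (\<integral>\<^sup>+ x. mdens_aux p (N - Suc m) (Suc k) x (Y a \<omega>) * G (\<lambda>i\<in>{..a}. Y i \<omega>) x \<partial>lborel)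
          * ennreal (rev_weight \<psi> Y a \<omega>) \<partial>M)"
  proof (rule nn_integral_cong)
    fix \<omega>
    have Gm: "(\<lambda>x. G (\<lambda>i\<in>{..a}. Y i \<omega>) x) \<in> borel_measurable lborel"
      by (rule measurable_compose[OF _ G, where f="\<lambda>x. ((\<lambda>i\<in>{..a}. Y i \<omega>), x)", simplified]; measurable)
    have "Suc (N - Suc m) = N - m" using mN by simp
    then show "(\<integral>\<^sup>+ z. mdens_aux p (N - m) k z (Y a \<omega>) * G'' (\<lambda>i\<in>{..a}. Y i \<omega>) z \<partial>lborel) * ennreal (rev_weight \<psi> Y a \<omega>)
      = (\<integral>\<^sup>+ x. mdens_aux p (N - Suc m) (Suc k) x (Y a \<omega>) * G (\<lambda>i\<in>{..a}. Y i \<omega>) x \<partial>lborel) * ennreal (rev_weight \<psi> Y a \<omega>)"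
      unfolding G''_def mdens_inner[OF p_meas Gm] by simp
  qed
  finally show ?case by (simp only: m_def add_Suc_right)
qed

lemma trans_meas:
  "(\<lambda>(x, z). trans_dens p a b x z) \<in> borel_measurable (borel \<Otimes>\<^sub>M borel)"
  unfolding trans_dens_def by (rule mdens_meas[OF p_meas])

lemma grid_lemma:
  fixes l :: nat and n :: "nat \<Rightarrow> nat"
  assumes grid: "\<And>i. i < l \<Longrightarrow> n i < n (Suc i)" and grid_end: "n l = N"
  shows "j \<le> l \<Longrightarrow> f \<in> borel_measurable (PiM {j..<l} (\<lambda>_. borel)) \<Longrightarrow>
    (\<integral>\<^sup>+ \<omega>. f (\<lambda>i\<in>{j..<l}. Y (N - n i) \<omega>) * ennreal (rev_weight \<psi> Y (N - n j) \<omega>) \<partial>M)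
    = (\<integral>\<^sup>+ ys. f ys * (\<Prod>i\<in>{Suc j..l}. trans_dens p (n (i - 1)) (n i) (ys (i - 1)) (if i = l then y else ys i))
         \<partial>PiM {j..<l} (\<lambda>_. lborel))"
proof (induction j arbitrary: f rule: inc_induct)
  case base
  interpret P: prob_space M by (rule M_prob)
  have "(\<integral>\<^sup>+ \<omega>. f (\<lambda>i\<in>{l..<l}. Y (N - n i) \<omega>) * ennreal (rev_weight \<psi> Y (N - n l) \<omega>) \<partial>M)
      = (\<integral>\<^sup>+ \<omega>. f (\<lambda>_. undefined) \<partial>M)"
    by (simp add: grid_end rev_weight_def restrict_def)
  also have "\<dots> = f (\<lambda>_. undefined)" by (simp add: P.emeasure_space_1)
  also have "\<dots> = (\<integral>\<^sup>+ ys. f ys * (\<Prod>i\<in>{Suc l..l}. trans_dens p (n (i - 1)) (n i) (ys (i - 1)) (if i = l then y else ys i))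
         \<partial>PiM {l..<l} (\<lambda>_. lborel))"
    by (simp add: PiM_empty nn_integral_count_space_finite)
  finally show ?case .
next
  case (step j)
  have nmono: "n i \<le> n i'" if "i \<le> i'" "i' \<le> l" for i i'
    using that
  proof (induction i' rule: dec_induct)
    case base then show ?case by simp
  next
    case (step m) then show ?case using grid[of m] by simp
  qed
  define a where "a = N - n (Suc j)"
  define b where "b = N - n j"
  define k where "k = n (Suc j) - n j - 1"
  have njs: "n j < n (Suc j)" using grid step.hyps by simp
  have nle: "n (Suc j) \<le> N" using nmono[of "Suc j" l] step.hyps grid_end by simp
  have bk: "b = Suc (a + k)" and akN: "a + k < N" using njs nle unfolding a_def b_def k_def by auto
  have sub: "N - n i \<le> a" if "Suc j \<le> i" "i \<le> l" for i
    using nmono[OF that] unfolding a_def by simp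
  define G where "G u x = f (\<lambda>i\<in>{j..<l}. if i = j then x else u (N - n i))" for u :: "nat \<Rightarrow> real^'d" and x
  have Gm: "case_prod G \<in> borel_measurable (PiM {..a} (\<lambda>_. borel) \<Otimes>\<^sub>M borel)"
  proof -
    have "(\<lambda>ux. f (\<lambda>i\<in>{j..<l}. if i = j then snd ux else fst ux (N - n i)))
       \<in> borel_measurable (PiM {..a} (\<lambda>_. borel) \<Otimes>\<^sub>M borel)"
      apply (rule measurable_compose[OF _ step.prems])
      apply (rule measurable_restrict)
      subgoal for i
        apply (cases "i = j")
         apply simp
        apply simp
        apply (rule measurable_compose[OF measurable_fst measurable_component_singleton])
        using sub[of i] by simp
      done
    then show ?thesis unfolding G_def by (simp add: case_prod_beta')
  qed
  define w where "w v = (if Suc j = l then y else v (Suc j))" for v :: "nat \<Rightarrow> real^'d"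
  define f' where "f' v = (\<integral>\<^sup>+ x. trans_dens p (n j) (n (Suc j)) x (w v) * f (\<lambda>i\<in>{j..<l}. if i = j then x else v i) \<partial>lborel)" for v
  have wm: "w \<in> borel_measurable (PiM {Suc j..<l} (\<lambda>_. borel))"
  proof (cases "Suc j = l")
    case True then show ?thesis unfolding w_def by simp
  next
    case False
    then show ?thesis unfolding w_def using step.hyps by simp
  qed
    have intm: "(\<lambda>vx. trans_dens p (n j) (n (Suc j)) (snd vx) (w (fst vx)) * f (\<lambda>i\<in>{j..<l}. if i = j then snd vx else fst vx i))
       \<in> borel_measurable (PiM {Suc j..<l} (\<lambda>_. borel) \<Otimes>\<^sub>M lborel)"
      apply (intro borel_measurable_times_ennreal)
       apply (rule meas_app2[OF trans_meas])
        apply (rule measurable_compose[OF measurable_snd measurable_ident_sets[OF sets_lborel]])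
       apply (rule measurable_compose[OF measurable_fst])
       apply (rule wm)
      apply (rule measurable_compose[OF _ step.prems])
      apply (rule measurable_restrict)
      apply (rule meas_if_const)
       apply (rule measurable_compose[OF measurable_snd measurable_ident_sets[OF sets_lborel]])
      apply (rule measurable_compose[OF measurable_fst measurable_component_singleton])
      apply auto
      done
  have f'm: "f' \<in> borel_measurable (PiM {Suc j..<l} (\<lambda>_. borel))"
    using intm unfolding f'_def
      by (intro lborel.borel_measurable_nn_integral) (simp only: case_prod_beta')
  define PP where "PP ys = (\<Prod>i\<in>{Suc (Suc j)..l}. trans_dens p (n (i - 1)) (n i) (ys (i - 1)) (if i = l then y else ys i))" for ys :: "nat \<Rightarrow> real^'d"
  define F where "F ys = f ys * (\<Prod>i\<in>{Suc j..l}. trans_dens p (n (i - 1)) (n i) (ys (i - 1)) (if i = l then y else ys i))" for ys :: "nat \<Rightarrow> real^'d"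
  have ins: "{j..<l} = insert j {Suc j..<l}" using step.hyps by auto
  have Fm: "F \<in> borel_measurable (PiM {j..<l} (\<lambda>_. lborel))"
    unfolding F_def
    apply (intro borel_measurable_times_ennreal PiM_lborel_meas step.prems borel_measurable_prod_ennreal)
    apply (rule meas_app2[OF trans_meas])
     apply (rule measurable_component_singleton)
     apply force
    apply (rule meas_if_const)
     apply simp
    apply (rule measurable_component_singleton)
    apply auto
    done
  have "(\<integral>\<^sup>+ \<omega>. f (\<lambda>i\<in>{j..<l}. Y (N - n i) \<omega>) * ennreal (rev_weight \<psi> Y (N - n j) \<omega>) \<partial>M)
     = (\<integral>\<^sup>+ \<omega>. G (\<lambda>i\<in>{..a}. Y i \<omega>) (Y (Suc (a + k)) \<omega>) * ennreal (rev_weight \<psi> Y (Suc (a + k)) \<omega>) \<partial>M)"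
  proof (rule nn_integral_cong)
    fix \<omega>
    have "(\<lambda>i\<in>{j..<l}. Y (N - n i) \<omega>) = (\<lambda>i\<in>{j..<l}. if i = j then Y b \<omega> else (\<lambda>i\<in>{..a}. Y i \<omega>) (N - n i))"
      using sub by (intro restrict_ext) (auto simp: b_def)
    note eq = this
    show "f (\<lambda>i\<in>{j..<l}. Y (N - n i) \<omega>) * ennreal (rev_weight \<psi> Y (N - n j) \<omega>)
      = G (\<lambda>i\<in>{..a}. Y i \<omega>) (Y (Suc (a + k)) \<omega>) * ennreal (rev_weight \<psi> Y (Suc (a + k)) \<omega>)"
      by (simp only: G_def bk[symmetric] b_def[symmetric] eq)
  qed
  also have "\<dots> = (\<integral>\<^sup>+ \<omega>. (\<integral>\<^sup>+ x. mdens_aux p (N - Suc (a + k)) k x (Y a \<omega>) * G (\<lambda>i\<in>{..a}. Y i \<omega>) x \<partial>lborel)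
          * ennreal (rev_weight \<psi> Y a \<omega>) \<partial>M)"
    by (rule multi[OF akN Gm])
  also have "\<dots> = (\<integral>\<^sup>+ \<omega>. f' (\<lambda>i\<in>{Suc j..<l}. Y (N - n i) \<omega>) * ennreal (rev_weight \<psi> Y (N - n (Suc j)) \<omega>) \<partial>M)"
  proof (rule nn_integral_cong)
    fix \<omega> assume \<omega>: "\<omega> \<in> space M"
    have wY: "w (\<lambda>i\<in>{Suc j..<l}. Y (N - n i) \<omega>) = Y a \<omega>"
    proof (cases "Suc j = l")
      case True
      then have "a = 0" unfolding a_def using grid_end by simp
      then show ?thesis using True Y_0[OF \<omega>] unfolding w_def by simp
    next
      case False
      then show ?thesis unfolding w_def a_def using step.hyps by simp
    qed
    have td: "trans_dens p (n j) (n (Suc j)) = mdens_aux p (N - Suc (a + k)) k"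
    proof -
      have "N - Suc (a + k) = n j" using bk njs nle unfolding b_def by simp
      then show ?thesis by (intro ext) (simp add: trans_dens_def k_def)
    qed
    have "(\<lambda>i\<in>{j..<l}. if i = j then x else (\<lambda>i\<in>{..a}. Y i \<omega>) (N - n i))
        = (\<lambda>i\<in>{j..<l}. if i = j then x else (\<lambda>i\<in>{Suc j..<l}. Y (N - n i) \<omega>) i)" for x
      using sub by (intro restrict_ext) auto
    note eqx = this
    show "(\<integral>\<^sup>+ x. mdens_aux p (N - Suc (a + k)) k x (Y a \<omega>) * G (\<lambda>i\<in>{..a}. Y i \<omega>) x \<partial>lborel)
          * ennreal (rev_weight \<psi> Y a \<omega>) =
      f' (\<lambda>i\<in>{Suc j..<l}. Y (N - n i) \<omega>) * ennreal (rev_weight \<psi> Y (N - n (Suc j)) \<omega>)"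
      by (simp only: f'_def G_def wY td a_def[symmetric] eqx)
  qed
  also have "\<dots> = (\<integral>\<^sup>+ ys. f' ys * (\<Prod>i\<in>{Suc (Suc j)..l}. trans_dens p (n (i - 1)) (n i) (ys (i - 1)) (if i = l then y else ys i))
         \<partial>PiM {Suc j..<l} (\<lambda>_. lborel))"
    by (rule step.IH[OF f'm])
  also have "\<dots> = (\<integral>\<^sup>+ ys. f' ys * PP ys \<partial>PiM {Suc j..<l} (\<lambda>_. lborel))"
    unfolding PP_def ..
  also have "\<dots> = (\<integral>\<^sup>+ ys. (\<integral>\<^sup>+ t. F (ys(j := t)) \<partial>lborel) \<partial>PiM {Suc j..<l} (\<lambda>_. lborel))"
  proof (rule nn_integral_cong)
    fix ys assume ys: "ys \<in> space (PiM {Suc j..<l} (\<lambda>_. (lborel :: (real^'d) measure)))"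
    then have ysb: "ys \<in> space (PiM {Suc j..<l} (\<lambda>_. (borel :: (real^'d) measure)))"
      by (simp add: space_PiM)
    have ext: "ys \<in> extensional {Suc j..<l}" using ys by (simp add: space_PiM PiE_def)
    have e1: "ys(j := t) = (\<lambda>i\<in>{j..<l}. if i = j then t else ys i)" for t
      using ext step.hyps by (auto simp: fun_eq_iff extensional_def)
    have e2: "(\<Prod>i\<in>{Suc j..l}. trans_dens p (n (i - 1)) (n i) ((ys(j := t)) (i - 1)) (if i = l then y else (ys(j := t)) i))
       = trans_dens p (n j) (n (Suc j)) t (w ys) * PP ys" for t
    proof -
      have "{Suc j..l} = insert (Suc j) {Suc (Suc j)..l}" using step.hyps by auto
      then have "(\<Prod>i\<in>{Suc j..l}. trans_dens p (n (i - 1)) (n i) ((ys(j := t)) (i - 1)) (if i = l then y else (ys(j := t)) i))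
        = trans_dens p (n j) (n (Suc j)) t (w ys) *
          (\<Prod>i\<in>{Suc (Suc j)..l}. trans_dens p (n (i - 1)) (n i) ((ys(j := t)) (i - 1)) (if i = l then y else (ys(j := t)) i))"
        by (simp add: w_def)
      also have "(\<Prod>i\<in>{Suc (Suc j)..l}. trans_dens p (n (i - 1)) (n i) ((ys(j := t)) (i - 1)) (if i = l then y else (ys(j := t)) i))
         = PP ys"
        unfolding PP_def by (intro prod.cong) auto
      finally show ?thesis .
    qed
    have "f' ys * PP ys = (\<integral>\<^sup>+ t. trans_dens p (n j) (n (Suc j)) t (w ys) * f (\<lambda>i\<in>{j..<l}. if i = j then t else ys i) * PP ys \<partial>lborel)"
      unfolding f'_def
      by (rule nn_integral_multc[symmetric]) (rule measurable_Pair2[OF intm ysb, unfolded fst_conv snd_conv])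
    also have "\<dots> = (\<integral>\<^sup>+ t. F (ys(j := t)) \<partial>lborel)"
      apply (intro nn_integral_cong)
      apply (simp only: F_def e1[symmetric] e2)
      apply (simp only: ac_simps)
      done
    finally show "f' ys * PP ys = (\<integral>\<^sup>+ t. F (ys(j := t)) \<partial>lborel)" .
  qed
  also have "\<dots> = integral\<^sup>N (PiM (insert j {Suc j..<l}) (\<lambda>_. lborel)) F"
    by (rule lb.product_nn_integral_insert[symmetric]) (use Fm ins in auto)
  also have "\<dots> = (\<integral>\<^sup>+ ys. f ys * (\<Prod>i\<in>{Suc j..l}. trans_dens p (n (i - 1)) (n i) (ys (i - 1)) (if i = l then y else ys i))
         \<partial>PiM {j..<l} (\<lambda>_. lborel))" unfolding ins[symmetric] F_def ..
  finally show ?case .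
qed

end

theorem theorem3:
  fixes p :: "nat \<Rightarrow> real^'d \<Rightarrow> real^'d \<Rightarrow> real"
    and \<psi> :: "nat \<Rightarrow> real^'d \<Rightarrow> real^'d \<Rightarrow> real"
    and N :: nat and y :: "real^'d"
    and M :: "'a measure" and Y :: "nat \<Rightarrow> 'a \<Rightarrow> real^'d"
    and l :: nat and n :: "nat \<Rightarrow> nat"
    and f :: "(nat \<Rightarrow> real^'d) \<Rightarrow> ennreal"
  assumes p_meas: "\<And>k. (\<lambda>(x, z). p k x z) \<in> borel_measurable (borel \<Otimes>\<^sub>M borel)"
    and p_nonneg: "\<And>k x z. p k x z \<ge> 0"
    and p_dens: "\<And>k x. (\<integral>\<^sup>+ z. ennreal (p k x z) \<partial>lborel) = 1"
    and psi_meas: "\<And>m. m < N \<Longrightarrow> (\<lambda>(z, x). \<psi> m z x) \<in> borel_measurable (borel \<Otimes>\<^sub>M borel)"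
    and psi_nonneg: "\<And>m z x. m < N \<Longrightarrow> \<psi> m z x \<ge> 0"
    and psi_pos: "\<And>m z x. m < N \<Longrightarrow> p (N - m - 1) x z > 0 \<Longrightarrow> \<psi> m z x > 0"
    and q_dens: "\<And>m z. m < N \<Longrightarrow>
                   (\<integral>\<^sup>+ x. ennreal (rev_kernel p \<psi> N m z x) \<partial>lborel) = 1"
    and M_prob: "prob_space M"
    and Y_meas: "\<And>m. m \<le> N \<Longrightarrow> Y m \<in> borel_measurable M"
    and Y_0: "\<And>\<omega>. \<omega> \<in> space M \<Longrightarrow> Y 0 \<omega> = y"
    and Y_trans: "\<And>m g. m < N \<Longrightarrow>
        case_prod g \<in> borel_measurable (PiM {..m} (\<lambda>_. borel) \<Otimes>\<^sub>M borel) \<Longrightarrow>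
        (\<integral>\<^sup>+ \<omega>. g (\<lambda>i\<in>{..m}. Y i \<omega>) (Y (Suc m) \<omega>) \<partial>M) =
        (\<integral>\<^sup>+ \<omega>. (\<integral>\<^sup>+ z. ennreal (rev_kernel p \<psi> N m (Y m \<omega>) z) * g (\<lambda>i\<in>{..m}. Y i \<omega>) z \<partial>lborel) \<partial>M)"
    and l_pos: "l \<ge> 1"
    and grid: "\<And>i. i < l \<Longrightarrow> n i < n (Suc i)"
    and grid_end: "n l = N"
    and f_meas: "f \<in> borel_measurable (PiM {..<l} (\<lambda>_. borel))"
  shows "(\<integral>\<^sup>+ \<omega>. f (\<lambda>i\<in>{..<l}. Y (n l - n i) \<omega>) * ennreal (rev_weight \<psi> Y (n l - n 0) \<omega>) \<partial>M)
       = (\<integral>\<^sup>+ ys. f ys * (\<Prod>i\<in>{1..l}. trans_dens p (n (i - 1)) (n i) (ys (i - 1))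
                                         (if i = l then y else ys i))
            \<partial>PiM {..<l} (\<lambda>_. lborel))"
proof -
  interpret revp p \<psi> N y M Y
    using p_meas p_nonneg psi_meas psi_nonneg psi_pos M_prob Y_meas Y_0 Y_trans
    by (intro revp.intro) blast+
  have "(\<integral>\<^sup>+ \<omega>. f (\<lambda>i\<in>{0..<l}. Y (N - n i) \<omega>) * ennreal (rev_weight \<psi> Y (N - n 0) \<omega>) \<partial>M)
    = (\<integral>\<^sup>+ ys. f ys * (\<Prod>i\<in>{Suc 0..l}. trans_dens p (n (i - 1)) (n i) (ys (i - 1)) (if i = l then y else ys i))
         \<partial>PiM {0..<l} (\<lambda>_. lborel))"
    by (rule grid_lemma[OF grid grid_end]) (use f_meas in \<open>auto simp: atLeast0LessThan\<close>)
  then show ?thesis by (simp add: atLeast0LessThan grid_end)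
qed

end
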